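(* Let $M\ge 2$, and let $(\vec n_M^\dagger,\vec P_M^\dagger)$, with $\vec n_M^\dagger\in\mathbb{R}_{>0}^M$, $\vec P_M^\dagger\in\mathbb{R}_{\ge0}^M$, satisfy $\varepsilon_{M-1}(\vec n_{M-1}^\dagger,\vec P_{M-1}^\dagger)>\varepsilon_M(\vec n_M^\dagger,\vec P_M^\dagger)$. Then the function $P\mapsto \varepsilon_M(\vec n_M^\dagger,(P_1^\dagger,\dots,P_{M-1}^\dagger,P))$ has strictly negative derivative at $P=P_M^\dagger$; in particular it is strictly decreasing in a neighborhood of $P_M^\dagger$.
   Context: Fix $B>0$. Let $Q(x)=\frac{1}{\sqrt{2\pi}}\int_x^\infty e^{-t^2/2}\,dt$. For $m\ge 1$, blocklengths $\vec n_m=(n_1,\dots,n_m)$ with $n_i>0$ and powers $\vec P_m=(P_1,\dots,P_m)$ with $P_i\ge 0$ (not all zero), define $$\varepsilon_m(\vec n_m,\vec P_m)=Q\!\left(\frac{\sum_{i=1}^m n_i\ln(1+P_i)-B\ln 2}{\sqrt{\sum_{i=1}^m \frac{n_iP_i(P_i+2)}{(P_i+1)^2}}}\right).$$ *)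

theory Defs
  imports "HOL-Analysis.Analysis"
begin

definition Qfun :: "real \<Rightarrow> real" where
  "Qfun x = (LBINT t:{x..}. exp (- (t\<^sup>2) / 2)) / sqrt (2 * pi)"

definition eps :: "real \<Rightarrow> nat \<Rightarrow> (nat \<Rightarrow> real) \<Rightarrow> (nat \<Rightarrow> real) \<Rightarrow> real" where
  "eps B m n P = Qfun (((\<Sum>i=1..m. n i * ln (1 + P i)) - B * ln 2) /
      sqrt (\<Sum>i=1..m. n i * P i * (P i + 2) / (P i + 1)\<^sup>2))"

end

theory Submission imports Defs "HOL-Probability.Probability" begin


definition phi :: "real \<Rightarrow> real" where "phi t = exp (- (t\<^sup>2) / 2)"

lemma Qfun_phi: "Qfun x = (LBINT t:{x..}. phi t) / sqrt (2*pi)"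
  unfolding Qfun_def phi_def by simp

lemma phi_cont[continuous_intros]: "continuous_on A phi"
  unfolding phi_def by (auto intro!: continuous_intros)

lemma phi_integrable: "integrable lborel phi"
proof -
  have "integrable lborel (\<lambda>t. sqrt (2*pi) * std_normal_density t)" by simp
  moreover have "(\<lambda>t. sqrt (2*pi) * std_normal_density t) = phi"
    by (rule ext) (simp add: std_normal_density_def phi_def)
  ultimately show ?thesis by simp
qed

lemma phi_set_integrable: "set_integrable lborel A phi"
  if "A \<in> sets lborel"
  using that phi_integrable integrable_mult_indicator unfolding set_integrable_def by blast

lemma Q_split:
  "(LBINT t:{y..}. phi t) =
     (LBINT t=ereal 0..\<infinity>. phi t) - (LBINT t=ereal 0..ereal y. phi t)"
proof -
  have "(LBINT t=ereal 0..ereal y. phi t) + (LBINT t=ereal y..\<infinity>. phi t) = (LBINT t=ereal 0..\<infinity>. phi t)"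
    by (rule interval_integral_sum) (simp add: interval_lebesgue_integrable_def phi_set_integrable)
  moreover have "(LBINT t=ereal y..\<infinity>. phi t) = (LBINT t:{y<..}. phi t)"
    by (rule interval_integral_to_infinity_eq)
  moreover have "(LBINT t:{y<..}. phi t) = (LBINT t:{y..}. phi t)"
    by (rule set_integral_discrete_difference[where X="{y}"]) auto
  ultimately show ?thesis by linarith
qed

lemma F_deriv: "((\<lambda>u. LBINT t=ereal 0..ereal u. phi t) has_real_derivative phi x) (at x)"
proof -
  define a where "a = min 0 x - 1"
  define b where "b = max 0 x + 1"
  have "((\<lambda>u. LBINT t=ereal 0..ereal u. phi t) has_vector_derivative phi x) (at x within {a..b})"
    by (rule interval_integral_FTC2) (auto simp: a_def b_def intro!: continuous_intros)
  then have "((\<lambda>u. LBINT t=ereal 0..ereal u. phi t) has_vector_derivative phi x) (at x within {a<..<b})"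
    by (rule has_vector_derivative_within_subset) auto
  then have "((\<lambda>u. LBINT t=ereal 0..ereal u. phi t) has_vector_derivative phi x) (at x)"
    by (subst (asm) has_vector_derivative_within_open) (auto simp: a_def b_def)
  then show ?thesis
    by (simp add: has_real_derivative_iff_has_vector_derivative)
qed

lemma Q_deriv: "(Qfun has_real_derivative - phi x / sqrt (2*pi)) (at x)"
proof -
  have eq: "Qfun = (\<lambda>y. ((LBINT t=ereal 0..\<infinity>. phi t) - (LBINT t=ereal 0..ereal y. phi t)) / sqrt (2*pi))"
    by (rule ext) (simp add: Qfun_phi Q_split)
  show ?thesis unfolding eq
    using DERIV_cdivide[OF DERIV_diff[OF DERIV_const F_deriv[of x]], of "LBINT t=ereal 0..\<infinity>. phi t" "sqrt (2*pi)"] by simp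
qed

lemma phi_pos: "phi x > 0" by (simp add: phi_def)

lemma Q_deriv_neg: "- phi x / sqrt (2*pi) < 0" using phi_pos[of x] by simp

lemma Q_decr: "a < b \<Longrightarrow> Qfun b < Qfun a"
  using Q_deriv Q_deriv_neg by (intro DERIV_neg_imp_decreasing[of a b Qfun]) blast+

lemma Q_mono: "a \<le> b \<Longrightarrow> Qfun b \<le> Qfun a"
  using Q_decr[of a b] by (cases "a = b") auto


definition SS :: "real \<Rightarrow> real \<Rightarrow> real \<Rightarrow> real" where
  "SS S0 a t = S0 + a * t * (t + 2) / (t + 1)\<^sup>2"
definition XX :: "real \<Rightarrow> real \<Rightarrow> real \<Rightarrow> real \<Rightarrow> real" where
  "XX C0 S0 a t = (C0 + a * ln (1 + t)) / sqrt (SS S0 a t)"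
definition GG :: "real \<Rightarrow> real \<Rightarrow> real \<Rightarrow> real \<Rightarrow> real" where
  "GG C0 S0 a t = S0 * (1 + t)\<^sup>2 + a * t * (t + 2) - C0 - a * ln (1 + t)"

lemma v_deriv: "t > -1 \<Longrightarrow> ((\<lambda>t. t * (t + 2) / (t + 1)\<^sup>2) has_real_derivative 2 / (t + 1)^3) (at t)"
  apply (rule derivative_eq_intros refl)+
  apply simp
  apply (subgoal_tac "t + 1 \<noteq> 0")
  prefer 2 apply simp
  apply (simp add: divide_simps)
  apply (simp add: algebra_simps power2_eq_square power3_eq_cube eval_nat_numeral)
  done

lemma SS_pos: "S0 > 0 \<Longrightarrow> a > 0 \<Longrightarrow> t \<ge> 0 \<Longrightarrow> SS S0 a t > 0"
  unfolding SS_def by (intro add_pos_nonneg) auto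

lemma alg: fixes r u a N :: real shows "r > 0 \<Longrightarrow> u > 0 \<Longrightarrow> ((a * (1 / u)) * r - N * (inverse r / 2 * (a * (2 / u^3)))) / r\<^sup>2
   = a * (u\<^sup>2 * r\<^sup>2 - N) / (u^3 * r\<^sup>2 * r)"
  by (simp add: field_simps power2_eq_square power3_eq_cube)

lemma XX_deriv:
  assumes "a > 0" "S0 > 0" "t \<ge> 0"
  shows "(XX C0 S0 a has_real_derivative
           a * GG C0 S0 a t / ((1 + t)^3 * SS S0 a t * sqrt (SS S0 a t))) (at t)"
proof -
  have S: "SS S0 a t > 0" using SS_pos assms by auto
  have dS: "(SS S0 a has_real_derivative a * (2 / (t + 1)^3)) (at t)"
    unfolding SS_def
    using DERIV_add[OF DERIV_const DERIV_cmult[OF v_deriv, of t a]] assms(3)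
    by (simp add: mult.assoc times_divide_eq_right)
  have dsq: "((\<lambda>t. sqrt (SS S0 a t)) has_real_derivative inverse (sqrt (SS S0 a t)) / 2 * (a * (2 / (t + 1)^3))) (at t)"
    by (rule DERIV_chain2[OF DERIV_real_sqrt[OF S] dS])
  have dN: "((\<lambda>t. C0 + a * ln (1 + t)) has_real_derivative a * (1 / (1 + t))) (at t)"
    using assms(3) by (auto intro!: derivative_eq_intros)
  have q: "(XX C0 S0 a has_real_derivative
     ((a * (1 / (1 + t))) * sqrt (SS S0 a t) - (C0 + a * ln (1 + t)) * (inverse (sqrt (SS S0 a t)) / 2 * (a * (2 / (t + 1)^3)))) / (sqrt (SS S0 a t))\<^sup>2) (at t)"
    unfolding XX_def using DERIV_divide[OF dN dsq] S by (simp add: power2_eq_square)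
  have eqG: "(1 + t)\<^sup>2 * SS S0 a t = S0 * (1 + t)\<^sup>2 + a * t * (t + 2)"
    unfolding SS_def using assms(3) by (simp add: field_simps add.commute)
  have "((a * (1 / (1 + t))) * sqrt (SS S0 a t) - (C0 + a * ln (1 + t)) * (inverse (sqrt (SS S0 a t)) / 2 * (a * (2 / (t + 1)^3)))) / (sqrt (SS S0 a t))\<^sup>2
      = a * ((1 + t)\<^sup>2 * SS S0 a t - (C0 + a * ln (1 + t))) / ((1 + t)^3 * SS S0 a t * sqrt (SS S0 a t))"
    using S assms(3) alg[of "sqrt (SS S0 a t)" "1 + t" a "C0 + a * ln (1 + t)"]
    by (simp add: add.commute)
  also have "\<dots> = a * GG C0 S0 a t / ((1 + t)^3 * SS S0 a t * sqrt (SS S0 a t))"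
    unfolding eqG GG_def by (simp add: algebra_simps)
  finally show ?thesis using q by simp
qed

lemma GG_strict_mono:
  assumes "a > 0" "S0 \<ge> 0" "0 \<le> s" "s < t"
  shows "GG C0 S0 a s < GG C0 S0 a t"
proof -
  have l: "ln (1 + t) - ln (1 + s) \<le> t - s"
  proof -
    have "ln (1 + t) - ln (1 + s) = ln ((1 + t) / (1 + s))"
      using assms by (simp add: ln_div)
    also have "\<dots> \<le> (1 + t) / (1 + s) - 1" using assms by (intro ln_le_minus_one) auto
    also have "\<dots> = (t - s) / (1 + s)" using assms by (simp add: field_simps)
    also have "\<dots> \<le> t - s" using assms by (simp add: divide_le_eq)
    finally show ?thesis .
  qed
  have q: "t * (t + 2) - s * (s + 2) \<ge> 2 * (t - s)"
  proof -
    have "t * (t + 2) - s * (s + 2) = (t - s) * (t + s + 2)" by (simp add: algebra_simps)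
    moreover have "(t - s) * 2 \<le> (t - s) * (t + s + 2)" using assms by (intro mult_left_mono) auto
    ultimately show ?thesis by simp
  qed
  have p: "S0 * (1 + t)\<^sup>2 \<ge> S0 * (1 + s)\<^sup>2"
    using assms by (intro mult_left_mono power_mono) auto
  have "a * (ln (1 + t) - ln (1 + s)) \<le> a * (t - s)" using l assms by simp
  moreover have "a * (t * (t + 2) - s * (s + 2)) \<ge> a * (2 * (t - s))" using q assms by simp
  moreover have "a * (t - s) > 0" using assms by simp
  ultimately show ?thesis unfolding GG_def using p
    by (simp only: right_diff_distrib)
qed

lemma GG_cont: "t \<ge> 0 \<Longrightarrow> isCont (GG C0 S0 a) t"
  unfolding GG_def by (auto intro!: continuous_intros)


theorem lemma2:
  fixes B :: real and M :: nat and n P :: "nat \<Rightarrow> real"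
  assumes B: "B > 0"
    and M: "M \<ge> 2"
    and n_pos: "\<And>i. i \<in> {1..M} \<Longrightarrow> n i > 0"
    and P_nonneg: "\<And>i. i \<in> {1..M} \<Longrightarrow> P i \<ge> 0"
    and P_nz: "\<exists>i\<in>{1..M-1}. P i \<noteq> 0"
    and gap: "eps B (M - 1) n P > eps B M n P"
  shows "(\<exists>D. D < 0 \<and>
           ((\<lambda>p. eps B M n (P(M := p))) has_real_derivative D) (at (P M) within {0..})) \<and>
         (\<exists>\<delta>>0. \<forall>p\<in>{0..}. \<forall>q\<in>{0..}.
           P M - \<delta> < p \<longrightarrow> p < q \<longrightarrow> q < P M + \<delta> \<longrightarrow>
           eps B M n (P(M := q)) < eps B M n (P(M := p)))"
proof -
  define a where "a = n M"
  define C0 where "C0 = (\<Sum>i=1..M-1. n i * ln (1 + P i)) - B * ln 2"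
  define S0 where "S0 = (\<Sum>i=1..M-1. n i * P i * (P i + 2) / (P i + 1)\<^sup>2)"
  have a: "a > 0" unfolding a_def using n_pos M by auto
  have S0: "S0 > 0"
  proof -
    from P_nz obtain j where j: "j \<in> {1..M-1}" "P j \<noteq> 0" by blast
    have "P j \<ge> 0" using P_nonneg[of j] j by auto
    then have Pj: "P j > 0" using j by auto
    have nj: "n j > 0" using n_pos[of j] j by auto
    show ?thesis unfolding S0_def
    proof (rule sum_pos2[OF _ j(1)])
      show "0 < n j * P j * (P j + 2) / (P j + 1)\<^sup>2" using Pj nj by simp
      show "\<And>i. i \<in> {1..M - 1} \<Longrightarrow> 0 \<le> n i * P i * (P i + 2) / (P i + 1)\<^sup>2"
      proof -
        fix i assume i: "i \<in> {1..M - 1}"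
        have "P i \<ge> 0" "n i > 0" using P_nonneg[of i] n_pos[of i] i by auto
        then show "0 \<le> n i * P i * (P i + 2) / (P i + 1)\<^sup>2" by simp
      qed
    qed auto
  qed
  have Msuc: "M = Suc (M - 1)" using M by simp
  have split: "\<And>f :: nat \<Rightarrow> real. (\<Sum>i=1..M. f i) = (\<Sum>i=1..M-1. f i) + f M"
  proof -
    fix f :: "nat \<Rightarrow> real"
    obtain k where k: "M = Suc k" "k \<ge> 1" using M by (cases M) auto
    show "(\<Sum>i=1..M. f i) = (\<Sum>i=1..M-1. f i) + f M" unfolding k(1) using k(2) by simp
  qed
  have epsM: "\<And>t. eps B M n (P(M:=t)) = Qfun (XX C0 S0 a t)"
  proof -
    fix t
    have e1: "(\<Sum>i=1..M-1. n i * ln (1 + (P(M:=t)) i)) = (\<Sum>i=1..M-1. n i * ln (1 + P i))"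
      by (rule sum.cong) auto
    have e2: "(\<Sum>i=1..M-1. n i * (P(M:=t)) i * ((P(M:=t)) i + 2) / ((P(M:=t)) i + 1)\<^sup>2)
        = (\<Sum>i=1..M-1. n i * P i * (P i + 2) / (P i + 1)\<^sup>2)"
      by (rule sum.cong) auto
    show "eps B M n (P(M:=t)) = Qfun (XX C0 S0 a t)"
      unfolding eps_def XX_def SS_def split e1 e2 fun_upd_same C0_def S0_def a_def
      by (simp only: diff_add_eq)
  qed
  have X0: "XX C0 S0 a 0 = C0 / sqrt S0" by (simp add: XX_def SS_def)
  have "eps B (M-1) n P = Qfun (C0 / sqrt S0)"
    unfolding eps_def C0_def S0_def ..
  then have eps1: "eps B (M-1) n P = Qfun (XX C0 S0 a 0)" by (simp only: X0)
  have eps0: "eps B M n P = Qfun (XX C0 S0 a (P M))" using epsM[of "P M"] by simp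
  have fun_eq: "(\<lambda>p. eps B M n (P(M := p))) = (\<lambda>p. Qfun (XX C0 S0 a p))"
    using epsM by (rule ext)
  define D where "D t = a * GG C0 S0 a t / ((1 + t)^3 * SS S0 a t * sqrt (SS S0 a t))" for t
  have dX: "\<And>t. t \<ge> 0 \<Longrightarrow> (XX C0 S0 a has_real_derivative D t) (at t)"
    unfolding D_def using XX_deriv a S0 by blast
  have dH: "\<And>t. t \<ge> 0 \<Longrightarrow> ((\<lambda>p. eps B M n (P(M := p))) has_real_derivative
      (- phi (XX C0 S0 a t) / sqrt (2*pi)) * D t) (at t)"
    unfolding fun_eq by (rule DERIV_chain2[OF Q_deriv dX])
  have den: "\<And>t. t \<ge> 0 \<Longrightarrow> (1 + t)^3 * SS S0 a t * sqrt (SS S0 a t) > 0"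
    using SS_pos[OF S0 a] by auto
  have Dpos: "\<And>t. t \<ge> 0 \<Longrightarrow> GG C0 S0 a t > 0 \<Longrightarrow> D t > 0"
    unfolding D_def using den a by (auto intro!: divide_pos_pos)
  have Dnp: "\<And>t. t \<ge> 0 \<Longrightarrow> GG C0 S0 a t \<le> 0 \<Longrightarrow> D t \<le> 0"
  proof -
    fix t :: real assume t: "t \<ge> 0" "GG C0 S0 a t \<le> 0"
    have "a * GG C0 S0 a t \<le> 0" using a t(2) by (simp add: mult_nonneg_nonpos)
    then show "D t \<le> 0" unfolding D_def using den[OF t(1)] by (rule divide_nonpos_pos)
  qed
  have PM: "P M \<ge> 0" using P_nonneg M by auto
  have Hneg: "\<And>t. t \<ge> 0 \<Longrightarrow> GG C0 S0 a t > 0 \<Longrightarrow> (- phi (XX C0 S0 a t) / sqrt (2*pi)) * D t < 0"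
    using Dpos Q_deriv_neg by (meson mult_neg_pos)
  have GPM: "GG C0 S0 a (P M) > 0"
  proof (rule ccontr)
    assume "\<not> GG C0 S0 a (P M) > 0"
    then have g: "GG C0 S0 a (P M) \<le> 0" by simp
    have "\<And>t. 0 \<le> t \<Longrightarrow> t \<le> P M \<Longrightarrow> GG C0 S0 a t \<le> 0"
    proof -
      fix t assume t: "0 \<le> t" "t \<le> P M"
      show "GG C0 S0 a t \<le> 0"
      proof (cases "t = P M")
        case True then show ?thesis using g by simp
      next
        case False
        then have "GG C0 S0 a t < GG C0 S0 a (P M)"
          using GG_strict_mono[OF a less_imp_le[OF S0], of t "P M"] t by simp
        then show ?thesis using g by simp
      qed
    qed
    then have "XX C0 S0 a (P M) \<le> XX C0 S0 a 0"
      using dX Dnp PM by (intro DERIV_nonpos_imp_nonincreasing[of 0 "P M" "XX C0 S0 a"]) blast+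
    then have "Qfun (XX C0 S0 a 0) \<le> Qfun (XX C0 S0 a (P M))" by (rule Q_mono)
    then show False using gap eps0 eps1 by simp
  qed
  have part1: "\<exists>D. D < 0 \<and>
           ((\<lambda>p. eps B M n (P(M := p))) has_real_derivative D) (at (P M) within {0..})"
    using dH[OF PM] Hneg[OF PM GPM] has_field_derivative_at_within by blast
  have "isCont (GG C0 S0 a) (P M)" using GG_cont PM by blast
  then have "GG C0 S0 a \<midarrow>P M\<rightarrow> GG C0 S0 a (P M)" by (simp add: isCont_def)
  from LIM_fun_gt_zero[OF this GPM] obtain r where r: "r > 0"
    "\<And>x. x \<noteq> P M \<and> \<bar>P M - x\<bar> < r \<longrightarrow> 0 < GG C0 S0 a x" by blast
  have near: "\<And>x. \<bar>P M - x\<bar> < r \<Longrightarrow> 0 < GG C0 S0 a x"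
    using r(2) GPM by (metis)
  have part2: "\<exists>\<delta>>0. \<forall>p\<in>{0..}. \<forall>q\<in>{0..}.
           P M - \<delta> < p \<longrightarrow> p < q \<longrightarrow> q < P M + \<delta> \<longrightarrow>
           eps B M n (P(M := q)) < eps B M n (P(M := p))"
  proof (intro exI[of _ r] conjI ballI impI)
    show "r > 0" by (rule r)
    fix p q :: real assume p: "p \<in> {0..}" and q: "q \<in> {0..}" and
      h: "P M - r < p" "p < q" "q < P M + r"
    show "eps B M n (P(M := q)) < eps B M n (P(M := p))"
    proof (rule DERIV_neg_imp_decreasing[OF h(2)])
      fix x assume x: "p \<le> x" "x \<le> q"
      have x0: "x \<ge> 0" using p x by simp
      have "0 < GG C0 S0 a x" using near[of x] x h by simp
      then show "\<exists>y. ((\<lambda>p. eps B M n (P(M := p))) has_real_derivative y) (at x) \<and> y < 0"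
        using dH[OF x0] Hneg[OF x0] by blast
    qed
  qed
  show ?thesis using part1 part2 by blast
qed

end
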